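(* Let $\mathcal{C}$ be an $[n,k,d]_q$ linear code with two $(r_i,\delta_i)_{i\in\{1,2\}}$ localities with respect to the sets $\mathcal{T}_1$, $\mathcal{T}_2=[n]\setminus\mathcal{T}_1$, where $n_i=|\mathcal{T}_i|$, $r_1\le r_2$ and $\delta_1\ge\delta_2\ge 2$. Put $\Delta=\lceil n_1/(r_1+\delta_1-1)\rceil(\delta_1-1)$. Suppose that $r_1\lceil n_1/(r_1+\delta_1-1)\rceil\le k-1$ and $r_1\lceil(\Delta-1)/(\delta_1-1)\rceil+(\Delta-1)<n_1$. Then $$\Phi(x)\le r_1\left\lceil\frac{x}{\delta_1-1}\right\rceil+x \quad\text{for } 0\le x\le\Delta,$$ and $$\Phi(x)\le r_1\left\lceil\frac{n_1}{r_1+\delta_1-1}\right\rceil+r_2\left\lceil\frac{x-\Delta}{\delta_2-1}\right\rceil+x\quad\text{for } \Delta\le x\le\rho+1,$$ where $\rho=\max\{x:\Phi(x)-x<k\}$.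
   Context: $[n]=\{1,\dots,n\}$. For an $[n,k,d]_q$ linear code $\mathcal{C}$ with generator matrix $G$ whose columns are $\vec g_1,\dots,\vec g_n$, a regenerating set of coordinate $i$ is a subset $R\subseteq[n]$ with $i\in R$ such that $\vec g_i$ is an $\mathbb{F}_q$-linear combination of $\{\vec g_j\}_{j\in R\setminus\{i\}}$; regenerating sets are always taken to be minimal (no proper subset $R'\subsetneq R\setminus\{i\}$ has $\vec g_i$ in the span of $\{\vec g_j\}_{j\in R'}$). $\mathcal{R}_i$ denotes the collection of all regenerating sets of coordinate $i$. A sequence $R_1,\dots,R_m$ with $R_t\in\mathcal{R}_{l_t}$, $l_t\in[n]$, has a nontrivial union if $l_j\notin\bigcup_{t=1}^{j-1}R_t$ for all $1\le j\le m$. Define $\Phi(0)=0$ and, for $x\ge1$, $\Phi(x)=\min\{|\bigcup_{t=1}^xR_t| : R_t\in\mathcal{R}_{l_t},\ R_1,\dots,R_x\text{ have a nontrivial union}\}$. Two $(r_i,\delta_i)_{i\in\{1,2\}}$ localities: $\mathcal{T}_1\subseteq[n]$, $\mathcal{T}_2=[n]\setminus\mathcal{T}_1$, $r_1\le r_2$, $\delta_1\ge\delta_2\ge2$ integers, and for $i=1,2$ and each $\iota\in\mathcal{T}_i$ there is $S_\iota\subseteq\mathcal{T}_i$ with $\iota\in S_\iota$, $\delta_i\le|S_\iota|\le r_i+\delta_i-1$, such that for every $E\subseteq S_\iota$ with $|E|=\delta_i-1$ and every $j\in E$, $(S_\iota\setminus E)\cup\{j\}\in\mathcal{R}_j$.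 *)

theory Defs
  imports Complex_Main
begin

text \<open>A linear code of length n and dimension k over a finite field 'a is given by a
 generator matrix G (k x n); its columns are g j (for j in {1..n}), with entries g j r, r < k.\<close>

definition in_span :: "(nat \<Rightarrow> nat \<Rightarrow> 'a::field) \<Rightarrow> nat \<Rightarrow> nat \<Rightarrow> nat set \<Rightarrow> bool" where
  "in_span g k i S \<longleftrightarrow> (\<exists>c. \<forall>r<k. g i r = (\<Sum>j\<in>S. c j * g j r))"

definition codeword :: "(nat \<Rightarrow> nat \<Rightarrow> 'a::field) \<Rightarrow> nat \<Rightarrow> (nat \<Rightarrow> 'a) \<Rightarrow> nat \<Rightarrow> 'a" where
  "codeword g k m j = (\<Sum>r<k. m r * g j r)"

definition full_row_rank :: "(nat \<Rightarrow> nat \<Rightarrow> 'a::field) \<Rightarrow> nat \<Rightarrow> nat \<Rightarrow> bool" where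
  "full_row_rank g n k \<longleftrightarrow>
     (\<forall>m. (\<forall>j\<in>{1..n}. codeword g k m j = 0) \<longrightarrow> (\<forall>r<k. m r = 0))"

definition weight :: "nat \<Rightarrow> (nat \<Rightarrow> 'a::zero) \<Rightarrow> nat" where
  "weight n c = card {j\<in>{1..n}. c j \<noteq> 0}"

definition min_dist :: "(nat \<Rightarrow> nat \<Rightarrow> 'a::field) \<Rightarrow> nat \<Rightarrow> nat \<Rightarrow> nat" where
  "min_dist g n k = Min {weight n (codeword g k m) | m. \<exists>j\<in>{1..n}. codeword g k m j \<noteq> 0}"

text \<open>[n,k,d]_q linear code with generator matrix g over the finite field 'a (q = CARD('a)).\<close>
definition is_code :: "(nat \<Rightarrow> nat \<Rightarrow> 'a::{field,finite}) \<Rightarrow> nat \<Rightarrow> nat \<Rightarrow> nat \<Rightarrow> bool" where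
  "is_code g n k d \<longleftrightarrow> full_row_rank g n k \<and> d = min_dist g n k"

definition regen :: "(nat \<Rightarrow> nat \<Rightarrow> 'a::field) \<Rightarrow> nat \<Rightarrow> nat \<Rightarrow> nat \<Rightarrow> nat set \<Rightarrow> bool" where
  "regen g n k i R \<longleftrightarrow> R \<subseteq> {1..n} \<and> i \<in> R \<and> in_span g k i (R - {i}) \<and>
     (\<forall>R'. R' \<subset> R - {i} \<longrightarrow> \<not> in_span g k i R')"

definition nontrivial_union :: "nat \<Rightarrow> (nat \<Rightarrow> nat set) \<Rightarrow> (nat \<Rightarrow> nat) \<Rightarrow> bool" where
  "nontrivial_union m R l \<longleftrightarrow> (\<forall>j\<in>{1..m}. l j \<notin> (\<Union>t\<in>{1..<j}. R t))"

definition Phi_set :: "(nat \<Rightarrow> nat \<Rightarrow> 'a::field) \<Rightarrow> nat \<Rightarrow> nat \<Rightarrow> nat \<Rightarrow> nat set" where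
  "Phi_set g n k x = {card (\<Union>t\<in>{1..x}. R t) | R l.
      (\<forall>t\<in>{1..x}. l t \<in> {1..n} \<and> regen g n k (l t) (R t)) \<and> nontrivial_union x R l}"

definition Phi :: "(nat \<Rightarrow> nat \<Rightarrow> 'a::field) \<Rightarrow> nat \<Rightarrow> nat \<Rightarrow> nat \<Rightarrow> nat" where
  "Phi g n k x = (if x = 0 then 0 else Min (Phi_set g n k x))"

text \<open>rho = max {x : Phi(x) - x < k}, over those x for which Phi(x) is defined.\<close>
definition rho :: "(nat \<Rightarrow> nat \<Rightarrow> 'a::field) \<Rightarrow> nat \<Rightarrow> nat \<Rightarrow> nat" where
  "rho g n k = Max {x. Phi_set g n k x \<noteq> {} \<and> int (Phi g n k x) - int x < int k}"

definition locality :: "(nat \<Rightarrow> nat \<Rightarrow> 'a::field) \<Rightarrow> nat \<Rightarrow> nat \<Rightarrow> nat set \<Rightarrow> nat \<Rightarrow> nat \<Rightarrow> bool" where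
  "locality g n k T r \<delta> \<longleftrightarrow> (\<forall>\<iota>\<in>T. \<exists>S. S \<subseteq> T \<and> \<iota> \<in> S \<and> \<delta> \<le> card S \<and> card S \<le> r + \<delta> - 1 \<and>
      (\<forall>E. E \<subseteq> S \<and> card E = \<delta> - 1 \<longrightarrow> (\<forall>j\<in>E. regen g n k j ((S - E) \<union> {j}))))"

definition two_localities :: "(nat \<Rightarrow> nat \<Rightarrow> 'a::field) \<Rightarrow> nat \<Rightarrow> nat \<Rightarrow> nat set \<Rightarrow> nat set \<Rightarrow>
    nat \<Rightarrow> nat \<Rightarrow> nat \<Rightarrow> nat \<Rightarrow> bool" where
  "two_localities g n k T1 T2 r1 r2 \<delta>1 \<delta>2 \<longleftrightarrow>
     T1 \<subseteq> {1..n} \<and> T2 = {1..n} - T1 \<and> r1 \<le> r2 \<and> \<delta>1 \<ge> \<delta>2 \<and> \<delta>2 \<ge> 2 \<and>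
     locality g n k T1 r1 \<delta>1 \<and> locality g n k T2 r2 \<delta>2"

end

theory Submission
  imports Defs
begin

definition vseq :: "(nat \<Rightarrow> nat \<Rightarrow> 'a::field) \<Rightarrow> nat \<Rightarrow> nat \<Rightarrow> nat \<Rightarrow> (nat \<Rightarrow> nat set) \<Rightarrow> (nat \<Rightarrow> nat) \<Rightarrow> bool" where
  "vseq g n k x R l \<longleftrightarrow> (\<forall>t\<in>{1..x}. l t \<in> {1..n} \<and> regen g n k (l t) (R t)) \<and> nontrivial_union x R l"

definition UU :: "nat \<Rightarrow> (nat \<Rightarrow> nat set) \<Rightarrow> nat set" where
  "UU x R = (\<Union>t\<in>{1..x}. R t)"

lemma Phi_set_alt: "Phi_set g n k x = {card (UU x R) | R l. vseq g n k x R l}"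
  unfolding Phi_set_def vseq_def UU_def by simp

lemma regen_basic: "regen g n k i R \<Longrightarrow> R \<subseteq> {1..n} \<and> i \<in> R \<and> in_span g k i (R - {i})"
  by (simp add: regen_def)

lemma vseq_sub:
  assumes v: "vseq g n k x R l" shows "UU x R \<subseteq> {1..n}"
proof
  fix u assume u: "u \<in> UU x R"
  then obtain t where t: "t \<in> {1..x}" "u \<in> R t" unfolding UU_def by blast
  then have "regen g n k (l t) (R t)" using v unfolding vseq_def by blast
  then have "R t \<subseteq> {1..n}" by (rule regen_basic[THEN conjunct1])
  then show "u \<in> {1..n}" using t(2) by (rule subsetD)
qed

lemma vseq_fin: "vseq g n k x R l \<Longrightarrow> finite (UU x R)"
  by (rule finite_subset[OF vseq_sub]) simp_all

lemma vseq_prefix: "vseq g n k x R l \<Longrightarrow> y \<le> x \<Longrightarrow> vseq g n k y R l"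
  unfolding vseq_def nontrivial_union_def by auto

lemma vseq0: "vseq g n k 0 R l" "UU 0 R = {}"
  unfolding vseq_def nontrivial_union_def UU_def by auto

lemma UU_Suc: "UU (Suc x) R = UU x R \<union> R (Suc x)"
  unfolding UU_def by (auto simp: atLeastAtMostSuc_conv)

lemma vseq_new:
  assumes v: "vseq g n k (Suc x) R l" shows "l (Suc x) \<in> R (Suc x) - UU x R"
proof -
  have "regen g n k (l (Suc x)) (R (Suc x))" using v unfolding vseq_def by simp
  then have a: "l (Suc x) \<in> R (Suc x)" using regen_basic by blast
  have "l (Suc x) \<notin> (\<Union>t\<in>{1..<Suc x}. R t)" using v unfolding vseq_def nontrivial_union_def by simp
  then have b: "l (Suc x) \<notin> UU x R" unfolding UU_def by (simp add: atLeastLessThanSuc_atLeastAtMost)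
  show ?thesis using a b by simp
qed

lemma vseq_grow: "vseq g n k x R l \<Longrightarrow> y \<le> x \<Longrightarrow> card (UU y R) + (x - y) \<le> card (UU x R)"
proof (induction x)
  case 0 then show ?case by simp
next
  case (Suc x)
  show ?case
  proof (cases "y = Suc x")
    case True then show ?thesis by simp
  next
    case False
    then have "y \<le> x" using Suc by simp
    have v: "vseq g n k x R l" using Suc vseq_prefix by fastforce
    have ih: "card (UU y R) + (x - y) \<le> card (UU x R)" using Suc.IH v \<open>y \<le> x\<close> by simp
    have fin: "finite (UU (Suc x) R)" using vseq_fin Suc by blast
    have "l (Suc x) \<in> UU (Suc x) R - UU x R" using vseq_new[OF Suc.prems(1)] UU_Suc by auto
    then have "UU x R \<subset> UU (Suc x) R" using UU_Suc by auto
    then have "card (UU x R) < card (UU (Suc x) R)" using fin psubset_card_mono by blast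
    then show ?thesis using ih \<open>y \<le> x\<close> by (simp add: Suc_diff_le)
  qed
qed

lemma vseq_extend_U:
  "UU (Suc x) (R(Suc x := S)) = UU x R \<union> S"
proof -
  have eqU: "UU x (R(Suc x := S)) = UU x R" unfolding UU_def by auto
  show ?thesis using eqU UU_Suc[of x "R(Suc x := S)"] by simp
qed

lemma vseq_extend_v:
  assumes v: "vseq g n k x R l" and c: "c \<notin> UU x R" and r: "regen g n k c S"
  shows "vseq g n k (Suc x) (R(Suc x := S)) (l(Suc x := c))"
proof -
  have cn: "c \<in> {1..n}" using regen_basic[OF r] by auto
  have A: "\<forall>t\<in>{1..Suc x}. (l(Suc x := c)) t \<in> {1..n} \<and> regen g n k ((l(Suc x := c)) t) ((R(Suc x := S)) t)"
  proof
    fix t assume t: "t \<in> {1..Suc x}"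
    show "(l(Suc x := c)) t \<in> {1..n} \<and> regen g n k ((l(Suc x := c)) t) ((R(Suc x := S)) t)"
    proof (cases "t = Suc x")
      case True then show ?thesis using cn r by simp
    next
      case False
      then have "t \<in> {1..x}" using t by auto
      then show ?thesis using v False unfolding vseq_def by simp
    qed
  qed
  have B: "nontrivial_union (Suc x) (R(Suc x := S)) (l(Suc x := c))"
    unfolding nontrivial_union_def
  proof
    fix j assume j: "j \<in> {1..Suc x}"
    show "(l(Suc x := c)) j \<notin> (\<Union>t\<in>{1..<j}. (R(Suc x := S)) t)"
    proof (cases "j = Suc x")
      case True
      have "(\<Union>t\<in>{1..<j}. (R(Suc x := S)) t) = UU x R"
        unfolding UU_def True by (auto simp: atLeastLessThanSuc_atLeastAtMost)
      then show ?thesis using c True by simp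
    next
      case False
      then have jx: "j \<in> {1..x}" using j by auto
      have "(\<Union>t\<in>{1..<j}. (R(Suc x := S)) t) = (\<Union>t\<in>{1..<j}. R t)" using jx by auto
      moreover have "l j \<notin> (\<Union>t\<in>{1..<j}. R t)" using v jx unfolding vseq_def nontrivial_union_def by blast
      ultimately show ?thesis using False by simp
    qed
  qed
  show ?thesis using A B unfolding vseq_def by blast
qed

lemma vseq_extend:
  assumes v: "vseq g n k x R l" and c: "c \<notin> UU x R" and r: "regen g n k c S"
  shows "vseq g n k (Suc x) (R(Suc x := S)) (l(Suc x := c)) \<and> UU (Suc x) (R(Suc x := S)) = UU x R \<union> S"
  using vseq_extend_v[OF v c r] by (simp add: vseq_extend_U)

lemma extend_set:
  assumes v: "vseq g n k x R l" and fC: "finite C"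
  shows "(\<forall>c\<in>C. regen g n k c (F c)) \<longrightarrow> C \<inter> UU x R = {} \<longrightarrow>
    (\<forall>c\<in>C. \<forall>c'\<in>C. c \<noteq> c' \<longrightarrow> c \<notin> F c') \<longrightarrow>
    (\<exists>R' l'. vseq g n k (x + card C) R' l' \<and> UU (x + card C) R' = UU x R \<union> (\<Union>c\<in>C. F c))"
  using fC
proof (induction C rule: finite_induct)
  case empty show ?case using v by (intro impI exI[of _ R] exI[of _ l]) simp
next
  case (insert c C)
  show ?case
  proof (intro impI)
    assume a1: "\<forall>c\<in>insert c C. regen g n k c (F c)" and a2: "insert c C \<inter> UU x R = {}"
      and a3: "\<forall>ca\<in>insert c C. \<forall>c'\<in>insert c C. ca \<noteq> c' \<longrightarrow> ca \<notin> F c'"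
    have b1: "\<forall>c\<in>C. regen g n k c (F c)" using a1 by blast
    have b2: "C \<inter> UU x R = {}" using a2 by blast
    have b3: "\<forall>ca\<in>C. \<forall>c'\<in>C. ca \<noteq> c' \<longrightarrow> ca \<notin> F c'" using a3 by blast
    obtain R' l' where v': "vseq g n k (x + card C) R' l'" and u': "UU (x + card C) R' = UU x R \<union> (\<Union>c\<in>C. F c)"
      using insert.IH b1 b2 b3 by blast
    have c1: "c \<notin> UU x R" using a2 by blast
    have c2: "c \<notin> (\<Union>c\<in>C. F c)"
    proof
      assume "c \<in> (\<Union>c\<in>C. F c)"
      then obtain c' where "c' \<in> C" "c \<in> F c'" by blast
      moreover have "c \<noteq> c'" using \<open>c' \<in> C\<close> insert.hyps(2) by blast
      ultimately show False using a3 by blast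
    qed
    have cn: "c \<notin> UU (x + card C) R'" using u' c1 c2 by simp
    have rc: "regen g n k c (F c)" using a1 by blast
    have e1: "vseq g n k (Suc (x + card C)) (R'(Suc (x + card C) := F c)) (l'(Suc (x + card C) := c))"
      using vseq_extend_v[OF v' cn rc] .
    have e2: "UU (Suc (x + card C)) (R'(Suc (x + card C) := F c)) = UU (x + card C) R' \<union> F c"
      by (rule vseq_extend_U)
    have cc: "x + card (insert c C) = Suc (x + card C)" using insert.hyps by simp
    have uu: "UU x R \<union> (\<Union>c\<in>insert c C. F c) = UU (x + card C) R' \<union> F c" using u' by auto
    show "\<exists>R' l'. vseq g n k (x + card (insert c C)) R' l' \<and> UU (x + card (insert c C)) R' = UU x R \<union> (\<Union>c\<in>insert c C. F c)"
      unfolding cc uu using e1 e2 by blast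
  qed
qed


lemma homog:
  fixes e :: "'b \<Rightarrow> 'c \<Rightarrow> 'a::field"
  assumes "finite V"
  shows "finite K \<Longrightarrow> card V < card K \<Longrightarrow> \<exists>m. (\<exists>r\<in>K. m r \<noteq> 0) \<and> (\<forall>v\<in>V. (\<Sum>r\<in>K. m r * e v r) = 0)"
  using assms
proof (induction V arbitrary: K e rule: finite_induct)
  case empty
  then obtain r0 where r0: "r0 \<in> K" by fastforce
  show ?case by (rule exI[of _ "\<lambda>r. if r = r0 then 1 else 0"]) (use r0 in auto)
next
  case (insert v0 V)
  show ?case
  proof (cases "\<forall>r\<in>K. e v0 r = 0")
    case True
    obtain m where m: "\<exists>r\<in>K. m r \<noteq> 0" "\<forall>v\<in>V. (\<Sum>r\<in>K. m r * e v r) = 0"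
      using insert.IH[of K e] insert.prems insert.hyps by auto
    show ?thesis using m True by (intro exI[of _ m]) auto
  next
    case False
    then obtain p where p: "p \<in> K" "e v0 p \<noteq> 0" by auto
    define K' where "K' = K - {p}"
    define e' where "e' = (\<lambda>v r. e v r - e v p * e v0 r / e v0 p)"
    have fK': "finite K'" using insert.prems K'_def by auto
    have cK': "card V < card K'" using insert.prems insert.hyps p K'_def by auto
    obtain m' where m': "\<exists>r\<in>K'. m' r \<noteq> 0" "\<forall>v\<in>V. (\<Sum>r\<in>K'. m' r * e' v r) = 0"
      using insert.IH[OF fK' cK'] by blast
    define S where "S = (\<Sum>r\<in>K'. m' r * e v0 r)"
    define m where "m = m'(p := - S / e v0 p)"
    have split: "\<And>f. (\<Sum>r\<in>K. m r * f r) = m p * f p + (\<Sum>r\<in>K'. m' r * f r)"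
    proof -
      fix f :: "'c \<Rightarrow> 'a"
      have "(\<Sum>r\<in>K. m r * f r) = m p * f p + (\<Sum>r\<in>K'. m r * f r)"
        using p insert.prems K'_def by (simp add: sum.remove)
      also have "(\<Sum>r\<in>K'. m r * f r) = (\<Sum>r\<in>K'. m' r * f r)"
        by (rule sum.cong) (auto simp: m_def K'_def)
      finally show "(\<Sum>r\<in>K. m r * f r) = m p * f p + (\<Sum>r\<in>K'. m' r * f r)" .
    qed
    have mp: "m p = - S / e v0 p" by (simp add: m_def)
    have nz: "\<exists>r\<in>K. m r \<noteq> 0" using m' by (auto simp: m_def K'_def)
    have eq0: "(\<Sum>r\<in>K. m r * e v0 r) = 0"
      using split[of "e v0"] mp p(2) by (simp add: S_def)
    have eqV: "(\<Sum>r\<in>K. m r * e v r) = 0" if v: "v \<in> V" for v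
    proof -
      have "0 = (\<Sum>r\<in>K'. m' r * e' v r)" using m' v by auto
      also have "\<dots> = (\<Sum>r\<in>K'. m' r * e v r) - e v p / e v0 p * S"
        unfolding e'_def S_def by (simp add: right_diff_distrib sum_subtractf sum_distrib_left mult_ac)
      finally have "(\<Sum>r\<in>K'. m' r * e v r) = e v p / e v0 p * S" by simp
      then show ?thesis using split[of "e v"] mp by simp
    qed
    show ?thesis using nz eq0 eqV by (intro exI[of _ m]) auto
  qed
qed


lemma vseq_inj:
  assumes v: "vseq g n k x R l" shows "inj_on l {1..x}"
proof (rule inj_onI)
  fix s t assume s: "s \<in> {1..x}" and t: "t \<in> {1..x}" and e: "l s = l t"
  show "s = t"
  proof (rule ccontr)
    assume "s \<noteq> t"
    then consider "s < t" | "t < s" by linarith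
    then show False
    proof cases
      case 1
      have "l s \<in> R s" using v s unfolding vseq_def using regen_basic by blast
      moreover have "l t \<notin> R s" using v t s 1 unfolding vseq_def nontrivial_union_def by auto
      ultimately show False using e by simp
    next
      case 2
      have "l t \<in> R t" using v t unfolding vseq_def using regen_basic by blast
      moreover have "l s \<notin> R t" using v t s 2 unfolding vseq_def nontrivial_union_def by auto
      ultimately show False using e by simp
    qed
  qed
qed

lemma vseq_rank:
  fixes g :: "nat \<Rightarrow> nat \<Rightarrow> 'a::field"
  assumes v: "vseq g n k x R l" and fr: "full_row_rank g n k"
  shows "x + k \<le> n"
proof -
  define L where "L = l ` {1..x}"
  define V where "V = {1..n} - L"
  have Ln: "L \<subseteq> {1..n}" using v unfolding vseq_def L_def by auto
  have cL: "card L = x" using vseq_inj[OF v] unfolding L_def by (simp add: card_image)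
  have xn: "x \<le> n" using card_mono[OF _ Ln] cL by simp
  have cV: "card V = n - x" unfolding V_def using Ln cL by (simp add: card_Diff_subset finite_subset)
  show ?thesis
  proof (rule ccontr)
    assume "\<not> x + k \<le> n"
    then have "card V < card {..<k}" using cV xn by simp
    then obtain m where m: "\<exists>r\<in>{..<k}. m r \<noteq> 0" "\<forall>v\<in>V. (\<Sum>r\<in>{..<k}. m r * g v r) = 0"
      using homog[of V "{..<k}" g] unfolding V_def by auto
    have cwV: "codeword g k m j = 0" if "j \<in> V" for j
      using m(2) that unfolding codeword_def by auto
    have cwL: "\<forall>t. t \<in> {1..x} \<longrightarrow> codeword g k m (l t) = 0"
    proof (rule allI)
      fix t show "t \<in> {1..x} \<longrightarrow> codeword g k m (l t) = 0"
      proof (induction t rule: less_induct)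
        case (less t)
        show ?case
        proof
          assume t: "t \<in> {1..x}"
          have rg: "regen g n k (l t) (R t)" using v t unfolding vseq_def by auto
          then obtain c where c: "\<forall>r<k. g (l t) r = (\<Sum>j\<in>R t - {l t}. c j * g j r)"
            using regen_basic[OF rg] unfolding in_span_def by auto
          have Rn: "R t \<subseteq> {1..n}" using regen_basic[OF rg] by auto
          have fR: "finite (R t - {l t})" using Rn finite_subset by auto
          have z: "codeword g k m j = 0" if j: "j \<in> R t - {l t}" for j
          proof (cases "j \<in> L")
            case False
            then show ?thesis using j Rn cwV unfolding V_def by auto
          next
            case True
            then obtain s where s: "s \<in> {1..x}" "j = l s" unfolding L_def by auto
            have "s \<noteq> t" using s j by auto
            moreover have "\<not> t < s"
            proof
              assume "t < s"
              then have "l s \<notin> R t" using v s t unfolding vseq_def nontrivial_union_def by auto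
              then show False using s j by auto
            qed
            ultimately have "s < t" by simp
            then show ?thesis using less.IH s by auto
          qed
          have "codeword g k m (l t) = (\<Sum>r<k. m r * (\<Sum>j\<in>R t - {l t}. c j * g j r))"
            unfolding codeword_def using c by (intro sum.cong) auto
          also have "\<dots> = (\<Sum>j\<in>R t - {l t}. c j * codeword g k m j)"
            unfolding codeword_def by (simp add: sum_distrib_left mult_ac sum.swap[of _ "{..<k}"])
          also have "\<dots> = 0" using z by simp
          finally show "codeword g k m (l t) = 0" .
        qed
      qed
    qed
    have "\<forall>j\<in>{1..n}. codeword g k m j = 0"
    proof
      fix j assume "j \<in> {1..n}"
      then show "codeword g k m j = 0"
        using cwV cwL unfolding V_def L_def by (cases "j \<in> l ` {1..x}") auto
    qed
    then have "\<forall>r<k. m r = 0" using fr unfolding full_row_rank_def by blast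
    then show False using m(1) by auto
  qed
qed


lemma step_lemma:
  assumes v: "vseq g n k y R l"
    and Sn: "S \<subseteq> {1..n}" and dS: "dS \<le> card S"
    and grp: "\<forall>E. E \<subseteq> S \<and> card E = dS - 1 \<longrightarrow> (\<forall>j\<in>E. regen g n k j ((S - E) \<union> {j}))"
    and b1: "1 \<le> b" and bN: "b \<le> card (S - UU y R)" and bd: "b \<le> dS - 1"
  shows "\<exists>R' l'. vseq g n k (y + b) R' l' \<and> UU (y + b) R' \<subseteq> UU y R \<union> S \<and>
     card (UU (y + b) R') \<le> card (UU y R) + b + (card (S - UU y R) - min (card (S - UU y R)) (dS - 1))"
proof -
  define W where "W = UU y R"
  define N where "N = S - W"
  define m0 where "m0 = min (card N) (dS - 1)"
  have fS: "finite S" using Sn finite_subset by auto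
  have fN: "finite N" using fS N_def by auto
  have fW: "finite W" using vseq_fin[OF v] W_def by simp
  obtain N0 where N0: "N0 \<subseteq> N" "card N0 = m0" using obtain_subset_with_card_n[of m0 N] m0_def by auto
  have bm0: "b \<le> m0" using bN bd m0_def N_def W_def by simp
  obtain C where C: "C \<subseteq> N0" "card C = b" using obtain_subset_with_card_n[of b N0] N0 bm0 by auto
  have NS: "N \<subseteq> S" using N_def by auto
  have cSN: "card (S - N) = card S - card N" using fS NS by (simp add: card_Diff_subset finite_subset)
  have cNS: "card N \<le> card S" using fS NS card_mono by auto
  have "dS - 1 - m0 \<le> card (S - N)" using cSN dS cNS m0_def by auto
  then obtain X where X: "X \<subseteq> S - N" "card X = dS - 1 - m0" using obtain_subset_with_card_n by metis
  define E where "E = N0 \<union> X"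
  have fN0: "finite N0" using N0 fN finite_subset by auto
  have fX: "finite X" using X fS finite_subset by auto
  have disj: "N0 \<inter> X = {}" using N0 X by auto
  have m0le: "m0 \<le> dS - 1" using m0_def by simp
  have cE: "card E = dS - 1" unfolding E_def using card_Un_disjoint[OF fN0 fX disj] N0 X m0le by simp
  have ES: "E \<subseteq> S" unfolding E_def using N0 X NS by auto
  have EN: "E \<inter> N = N0" unfolding E_def using N0 X by auto
  have rg: "\<forall>j\<in>E. regen g n k j ((S - E) \<union> {j})" using grp ES cE by blast
  have CE: "C \<subseteq> E" using C E_def by auto
  have fC: "finite C" using C fN0 finite_subset by auto
  have ex: "\<exists>R' l'. vseq g n k (y + card C) R' l' \<and> UU (y + card C) R' = UU y R \<union> (\<Union>c\<in>C. (S - E) \<union> {c})"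
    using extend_set[OF v fC, of "\<lambda>c. (S - E) \<union> {c}"] rg CE C N0 N_def W_def by auto
  then obtain R' l' where R': "vseq g n k (y + b) R' l'" "UU (y + b) R' = W \<union> (\<Union>c\<in>C. (S - E) \<union> {c})"
    using C W_def by auto
  have sub: "UU (y + b) R' \<subseteq> W \<union> ((S - E) - W) \<union> C" using R'(2) by auto
  have SEW: "(S - E) - W = N - N0" using EN N_def by auto
  have "card (UU (y + b) R') \<le> card (W \<union> ((S - E) - W) \<union> C)"
    using sub fW fS fC by (intro card_mono) auto
  also have "\<dots> \<le> card W + card ((S - E) - W) + card C"
    by (meson card_Un_le add_le_mono order_trans le_refl)
  also have "card ((S - E) - W) = card N - m0" using SEW N0 fN by (simp add: card_Diff_subset finite_subset)
  finally have cd: "card (UU (y + b) R') \<le> card W + b + (card N - m0)" using C by simp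
  have CS: "C \<subseteq> S" using CE ES by auto
  show ?thesis using R' sub cd CS unfolding W_def N_def m0_def by (intro exI[of _ R'] exI[of _ l']) auto
qed


lemma block_lemma:
  assumes v: "vseq g n k y R l"
    and An: "A \<subseteq> {1..n}"
    and grps: "\<forall>\<iota>\<in>A. \<exists>S dS. S \<subseteq> A \<and> \<iota> \<in> S \<and> dS \<le> card S \<and> card S \<le> r + dS - 1 \<and> \<delta> \<le> dS \<and>
          (\<forall>E. E \<subseteq> S \<and> card E = dS - 1 \<longrightarrow> (\<forall>j\<in>E. regen g n k j ((S - E) \<union> {j})))"
    and bd: "b \<le> \<delta> - 1"
    and nostuck: "\<forall>z R' l'. vseq g n k z R' l' \<longrightarrow> y \<le> z \<longrightarrow> z < y + b \<longrightarrow> UU z R' \<subseteq> UU y R \<union> A \<longrightarrow>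
          card (UU z R') \<le> card (UU y R) + (z - y) \<longrightarrow> \<not> A \<subseteq> UU z R'"
  shows "\<exists>R' l'. vseq g n k (y + b) R' l' \<and> UU (y + b) R' \<subseteq> UU y R \<union> A \<and>
           card (UU (y + b) R') \<le> card (UU y R) + r + b"
proof -
  define U where "U = UU y R"
  have main: "\<forall>z R' l'. vseq g n k z R' l' \<longrightarrow> y \<le> z \<longrightarrow> z \<le> y + b \<longrightarrow> UU z R' \<subseteq> U \<union> A \<longrightarrow>
          card (UU z R') \<le> card U + (z - y) \<longrightarrow> y + b - z = m \<longrightarrow>
          (\<exists>R' l'. vseq g n k (y + b) R' l' \<and> UU (y + b) R' \<subseteq> U \<union> A \<and>
           card (UU (y + b) R') \<le> card U + r + b)" for m
  proof (induction m rule: less_induct)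
    case (less m)
    show ?case
    proof (intro allI impI)
      fix z R' l'
      assume vz: "vseq g n k z R' l'" and yz: "y \<le> z" and zb: "z \<le> y + b" and sub: "UU z R' \<subseteq> U \<union> A"
        and cz: "card (UU z R') \<le> card U + (z - y)" and mz: "y + b - z = m"
      show "\<exists>R' l'. vseq g n k (y + b) R' l' \<and> UU (y + b) R' \<subseteq> U \<union> A \<and> card (UU (y + b) R') \<le> card U + r + b"
      proof (cases "z = y + b")
        case True
        have c1: "card (UU (y + b) R') \<le> card U + r + b" using cz True by simp
        have s1: "UU (y + b) R' \<subseteq> U \<union> A" using sub True by simp
        have v1: "vseq g n k (y + b) R' l'" using vz True by simp
        show ?thesis using c1 s1 v1 by (intro exI[of _ R'] exI[of _ l'] conjI)
      next
        case False
        then have zlt: "z < y + b" using zb by simp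
        have "\<not> A \<subseteq> UU z R'" using nostuck[rule_format, OF vz yz zlt sub[unfolded U_def] cz[unfolded U_def]] .
        then obtain \<iota> where \<iota>: "\<iota> \<in> A" "\<iota> \<notin> UU z R'" by auto
        obtain S dS where S: "S \<subseteq> A" "\<iota> \<in> S" "dS \<le> card S" "card S \<le> r + dS - 1" "\<delta> \<le> dS"
          "\<forall>E. E \<subseteq> S \<and> card E = dS - 1 \<longrightarrow> (\<forall>j\<in>E. regen g n k j ((S - E) \<union> {j}))"
          using bspec[OF grps \<iota>(1)] by (elim exE conjE) blast
        have Sn: "S \<subseteq> {1..n}" by (rule order_trans[OF S(1) An])
        have fS: "finite S" using finite_subset[OF Sn] by simp
        define N where "N = S - UU z R'"
        have fN: "finite N" using fS unfolding N_def by simp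
        have iN: "\<iota> \<in> N" using \<iota> S(2) N_def by simp
        then have "N \<noteq> {}" by blast
        then have "0 < card N" using fN by (simp add: card_gt_0_iff)
        then have N1: "1 \<le> card N" by simp
        have NS: "card N \<le> card S" by (rule card_mono[OF fS]) (simp add: N_def)
        define rem where "rem = y + b - z"
        have rem1: "1 \<le> rem" using zlt rem_def by simp
        have remd: "rem \<le> dS - 1" using rem_def bd S(5) yz by simp
        show ?thesis
        proof (cases "rem \<le> card N")
          case True
          obtain R2 l2 where R2: "vseq g n k (z + rem) R2 l2" "UU (z + rem) R2 \<subseteq> UU z R' \<union> S"
            "card (UU (z + rem) R2) \<le> card (UU z R') + rem + (card N - min (card N) (dS - 1))"
            using step_lemma[OF vz Sn S(3) S(6) rem1 True[unfolded N_def] remd] unfolding N_def by blast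
          have zr: "z + rem = y + b" using rem_def zlt by simp
          have "card N - min (card N) (dS - 1) \<le> r" using NS S(4) by simp
          then have "card (UU (y + b) R2) \<le> card U + r + b" using R2(3) zr cz rem_def yz zb by simp
          moreover have "UU (y + b) R2 \<subseteq> U \<union> A" using R2(2) zr sub S(1) by (simp add: Un_assoc) blast
          moreover have "vseq g n k (y + b) R2 l2" using R2(1) zr by simp
          ultimately show ?thesis by (intro exI[of _ R2] exI[of _ l2] conjI)
        next
          case False
          have Nd: "card N \<le> dS - 1" using False remd by simp
          obtain R2 l2 where R2: "vseq g n k (z + card N) R2 l2" "UU (z + card N) R2 \<subseteq> UU z R' \<union> S"
            "card (UU (z + card N) R2) \<le> card (UU z R') + card N + (card N - min (card N) (dS - 1))"
            using step_lemma[OF vz Sn S(3) S(6) N1[unfolded N_def] order_refl Nd[unfolded N_def]] unfolding N_def by blast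
          have c2: "card (UU (z + card N) R2) \<le> card U + (z + card N - y)" using R2(3) Nd cz yz by simp
          have s2: "UU (z + card N) R2 \<subseteq> U \<union> A" using R2(2) sub S(1) by blast
          have lt: "y + b - (z + card N) < m" using mz N1 zlt by simp
          have zz: "y \<le> z + card N" "z + card N \<le> y + b" using yz False rem_def by simp_all
          show ?thesis using less.IH[OF lt, rule_format, OF R2(1) zz(1) zz(2) s2 c2 refl] .
        qed
      qed
    qed
  qed
  have s0: "UU y R \<subseteq> U \<union> A" unfolding U_def by blast
  show ?thesis using main[of "y + b - y", rule_format, OF v order_refl le_add1 s0 _ refl] unfolding U_def by simp
qed


lemma Phi_fin: "finite (Phi_set g n k x)"
proof -
  have "Phi_set g n k x \<subseteq> {..n}"
  proof
    fix c assume "c \<in> Phi_set g n k x"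
    then obtain R l where "c = card (UU x R)" "vseq g n k x R l" unfolding Phi_set_alt by auto
    then have "card (UU x R) \<le> card {1..n}" using vseq_sub by (intro card_mono) simp_all
    then show "c \<in> {..n}" using \<open>c = card (UU x R)\<close> by simp
  qed
  then show ?thesis by (rule finite_subset) simp
qed

lemma phi_le: "vseq g n k x R l \<Longrightarrow> Phi_set g n k x \<noteq> {} \<and> Phi g n k x \<le> card (UU x R)"
proof -
  assume v: "vseq g n k x R l"
  have m: "card (UU x R) \<in> Phi_set g n k x" unfolding Phi_set_alt using v by auto
  then show ?thesis unfolding Phi_def using Min_le[OF Phi_fin m] by auto
qed

lemma phi_opt: "Phi_set g n k x \<noteq> {} \<Longrightarrow> \<exists>R l. vseq g n k x R l \<and> card (UU x R) = Phi g n k x"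
proof -
  assume ne: "Phi_set g n k x \<noteq> {}"
  show ?thesis
  proof (cases "x = 0")
    case True
    then show ?thesis unfolding Phi_def by (intro exI[of _ "\<lambda>_. {}"] exI[of _ "\<lambda>_. 0"]) (simp add: vseq0)
  next
    case False
    have "Min (Phi_set g n k x) \<in> Phi_set g n k x" using Min_in[OF Phi_fin ne] .
    then show ?thesis using False unfolding Phi_def Phi_set_alt by auto
  qed
qed

lemma rho_props:
  fixes g :: "nat \<Rightarrow> nat \<Rightarrow> 'a::field"
  assumes fr: "full_row_rank g n k" and k1: "1 \<le> k"
  shows "Phi_set g n k (rho g n k) \<noteq> {} \<and> int (Phi g n k (rho g n k)) - int (rho g n k) < int k"
proof -
  define X where "X = {x. Phi_set g n k x \<noteq> {} \<and> int (Phi g n k x) - int x < int k}"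
  have fX: "finite X"
  proof -
    have "X \<subseteq> {..n}"
    proof
      fix x assume "x \<in> X"
      then obtain R l where "vseq g n k x R l" using phi_opt unfolding X_def by blast
      then have "x + k \<le> n" by (rule vseq_rank[OF _ fr])
      then show "x \<in> {..n}" by simp
    qed
    then show ?thesis by (rule finite_subset) simp
  qed
  have p0: "Phi_set g n k 0 \<noteq> {}" using phi_le[OF vseq0(1)[of g n k "\<lambda>_. {}" "\<lambda>_. 0"]] by blast
  have "Phi g n k 0 = 0" unfolding Phi_def by simp
  then have "0 \<in> X" unfolding X_def using p0 k1 by simp
  then have "X \<noteq> {}" by blast
  then have "Max X \<in> X" using Max_in[OF fX] by blast
  then show ?thesis unfolding X_def rho_def by simp
qed

lemma rho_mono:
  fixes g :: "nat \<Rightarrow> nat \<Rightarrow> 'a::field"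
  assumes fr: "full_row_rank g n k" and k1: "1 \<le> k" and y: "y \<le> rho g n k"
  shows "Phi_set g n k y \<noteq> {} \<and> Phi g n k y < k + y"
proof -
  have rp: "Phi_set g n k (rho g n k) \<noteq> {}" "int (Phi g n k (rho g n k)) - int (rho g n k) < int k"
    using rho_props[OF fr k1] by auto
  obtain R l where Rl: "vseq g n k (rho g n k) R l" "card (UU (rho g n k) R) = Phi g n k (rho g n k)"
    using phi_opt[OF rp(1)] by blast
  have vy: "vseq g n k y R l" using vseq_prefix[OF Rl(1) y] .
  have gr: "card (UU y R) + (rho g n k - y) \<le> card (UU (rho g n k) R)" using vseq_grow[OF Rl(1) y] .
  have pl: "Phi_set g n k y \<noteq> {} \<and> Phi g n k y \<le> card (UU y R)" using phi_le[OF vy] .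
  show ?thesis using pl gr Rl(2) rp(2) y by linarith
qed

lemma ceil_lemma:
  assumes D: "1 \<le> D" and a: "q * D < x" and b: "x \<le> (q + 1) * D"
  shows "\<lceil>real x / real D\<rceil> = int q + 1"
proof (rule ceiling_unique)
  have Dp: "real D > 0" using D by simp
  have "real (q * D) < real x" using a by (simp only: of_nat_less_iff)
  then have "real q * real D < real x" by simp
  then show "of_int (int q + 1) - 1 < real x / real D" using Dp by (simp add: field_simps)
  have "real x \<le> real ((q + 1) * D)" using b by (simp only: of_nat_le_iff)
  then have "real x \<le> (real q + 1) * real D" by (simp add: distrib_right)
  then show "real x / real D \<le> of_int (int q + 1)" using Dp by (simp add: field_simps)
qed

lemma divfacts:
  fixes w D :: nat
  assumes "0 < w" "0 < D"
  shows "((w - 1) div D) * D < w \<and> w \<le> ((w - 1) div D + 1) * D"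
proof -
  define q where "q = (w - 1) div D"
  define rr where "rr = (w - 1) mod D"
  have e: "q * D + rr = w - 1" unfolding q_def rr_def by simp
  have r: "rr < D" unfolding rr_def using assms by simp
  have "q * D < w" using e assms by linarith
  moreover have "w \<le> (q + 1) * D"
  proof -
    have "w \<le> q * D + D" using e r assms by linarith
    moreover have "(q + 1) * D = q * D + D" by simp
    ultimately show ?thesis by simp
  qed
  ultimately show ?thesis unfolding q_def by simp
qed


theorem lemma1:
  fixes g :: "nat \<Rightarrow> nat \<Rightarrow> 'a::{field,finite}"
    and n k d r1 r2 \<delta>1 \<delta>2 n1 n2 :: nat and T1 T2 :: "nat set" and \<Delta> :: int
  assumes code: "is_code g n k d"
    and loc: "two_localities g n k T1 T2 r1 r2 \<delta>1 \<delta>2"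
    and n1: "n1 = card T1" and n2: "n2 = card T2"
    and Delta: "\<Delta> = \<lceil>real n1 / real (r1 + \<delta>1 - 1)\<rceil> * int (\<delta>1 - 1)"
    and h1: "int r1 * \<lceil>real n1 / real (r1 + \<delta>1 - 1)\<rceil> \<le> int k - 1"
    and h2: "int r1 * \<lceil>real_of_int (\<Delta> - 1) / real (\<delta>1 - 1)\<rceil> + (\<Delta> - 1) < int n1"
  shows "(\<forall>x::nat. int x \<le> \<Delta> \<longrightarrow>
            (x = 0 \<or> Phi_set g n k x \<noteq> {}) \<and>
            int (Phi g n k x) \<le> int r1 * \<lceil>real x / real (\<delta>1 - 1)\<rceil> + int x)
       \<and> (\<forall>x::nat. \<Delta> \<le> int x \<and> x \<le> rho g n k + 1 \<longrightarrow>
            (x = 0 \<or> Phi_set g n k x \<noteq> {}) \<and>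
            int (Phi g n k x) \<le> int r1 * \<lceil>real n1 / real (r1 + \<delta>1 - 1)\<rceil>
               + int r2 * \<lceil>real_of_int (int x - \<Delta>) / real (\<delta>2 - 1)\<rceil> + int x)"
proof -
  have fr: "full_row_rank g n k" using code unfolding is_code_def by simp
  have T1n: "T1 \<subseteq> {1..n}" and T2: "T2 = {1..n} - T1" and r12: "r1 \<le> r2" and d12: "\<delta>2 \<le> \<delta>1"
    and d2: "2 \<le> \<delta>2" and loc1: "locality g n k T1 r1 \<delta>1" and loc2: "locality g n k T2 r2 \<delta>2"
    using loc unfolding two_localities_def by auto
  define D1 where "D1 = \<delta>1 - 1"
  define D2 where "D2 = \<delta>2 - 1"
  have D1p: "1 \<le> D1" using d12 d2 D1_def by simp
  have D2p: "1 \<le> D2" using d2 D2_def by simp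
  define cint where "cint = \<lceil>real n1 / real (r1 + \<delta>1 - 1)\<rceil>"
  have nn: "0 \<le> real n1 / real (r1 + \<delta>1 - 1)" by simp
  have c0: "0 \<le> cint" using ceiling_mono[OF nn] unfolding cint_def by simp
  define cn where "cn = nat cint"
  have cn: "cint = int cn" using c0 cn_def by simp
  define Dn where "Dn = cn * D1"
  have DeltaDn: "\<Delta> = int Dn" using Delta cn unfolding Dn_def D1_def cint_def by simp
  have "0 \<le> int r1 * cint" using c0 by simp
  then have k1: "1 \<le> k" using h1 unfolding cint_def by linarith
  have fT1: "finite T1" using finite_subset[OF T1n] by simp

  have grp1: "\<forall>\<iota>\<in>T1. \<exists>S dS. S \<subseteq> T1 \<and> \<iota> \<in> S \<and> dS \<le> card S \<and> card S \<le> r1 + dS - 1 \<and> \<delta>1 \<le> dS \<and>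
          (\<forall>E. E \<subseteq> S \<and> card E = dS - 1 \<longrightarrow> (\<forall>j\<in>E. regen g n k j ((S - E) \<union> {j})))"
  proof
    fix \<iota> assume "\<iota> \<in> T1"
    then obtain S where S: "S \<subseteq> T1" "\<iota> \<in> S" "\<delta>1 \<le> card S" "card S \<le> r1 + \<delta>1 - 1"
       "\<forall>E. E \<subseteq> S \<and> card E = \<delta>1 - 1 \<longrightarrow> (\<forall>j\<in>E. regen g n k j ((S - E) \<union> {j}))"
      using bspec[OF loc1[unfolded locality_def] \<open>\<iota> \<in> T1\<close>] by (elim exE conjE) blast
    then show "\<exists>S dS. S \<subseteq> T1 \<and> \<iota> \<in> S \<and> dS \<le> card S \<and> card S \<le> r1 + dS - 1 \<and> \<delta>1 \<le> dS \<and>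
          (\<forall>E. E \<subseteq> S \<and> card E = dS - 1 \<longrightarrow> (\<forall>j\<in>E. regen g n k j ((S - E) \<union> {j})))"
      by (intro exI[of _ S] exI[of _ \<delta>1]) auto
  qed
  have grpn: "\<forall>\<iota>\<in>{1..n}. \<exists>S dS. S \<subseteq> {1..n} \<and> \<iota> \<in> S \<and> dS \<le> card S \<and> card S \<le> r2 + dS - 1 \<and> \<delta>2 \<le> dS \<and>
          (\<forall>E. E \<subseteq> S \<and> card E = dS - 1 \<longrightarrow> (\<forall>j\<in>E. regen g n k j ((S - E) \<union> {j})))"
  proof
    fix \<iota> assume i: "\<iota> \<in> {1..n}"
    show "\<exists>S dS. S \<subseteq> {1..n} \<and> \<iota> \<in> S \<and> dS \<le> card S \<and> card S \<le> r2 + dS - 1 \<and> \<delta>2 \<le> dS \<and>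
          (\<forall>E. E \<subseteq> S \<and> card E = dS - 1 \<longrightarrow> (\<forall>j\<in>E. regen g n k j ((S - E) \<union> {j})))"
    proof (cases "\<iota> \<in> T1")
      case True
      then obtain S where S: "S \<subseteq> T1" "\<iota> \<in> S" "\<delta>1 \<le> card S" "card S \<le> r1 + \<delta>1 - 1"
         "\<forall>E. E \<subseteq> S \<and> card E = \<delta>1 - 1 \<longrightarrow> (\<forall>j\<in>E. regen g n k j ((S - E) \<union> {j}))"
        using bspec[OF loc1[unfolded locality_def] True] by (elim exE conjE) blast
      then show ?thesis using T1n r12 d12 by (intro exI[of _ S] exI[of _ \<delta>1]) auto
    next
      case False
      then have "\<iota> \<in> T2" using T2 i by auto
      then obtain S where S: "S \<subseteq> T2" "\<iota> \<in> S" "\<delta>2 \<le> card S" "card S \<le> r2 + \<delta>2 - 1"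
         "\<forall>E. E \<subseteq> S \<and> card E = \<delta>2 - 1 \<longrightarrow> (\<forall>j\<in>E. regen g n k j ((S - E) \<union> {j}))"
        using bspec[OF loc2[unfolded locality_def] \<open>\<iota> \<in> T2\<close>] by (elim exE conjE) blast
      then show ?thesis using T2 by (intro exI[of _ S] exI[of _ \<delta>2]) auto
    qed
  qed

  have p1step: "\<exists>R' l'. vseq g n k (q*D1 + b) R' l' \<and> UU (q*D1 + b) R' \<subseteq> T1 \<and>
       card (UU (q*D1 + b) R') \<le> r1*q + q*D1 + r1 + b"
    if v: "vseq g n k (q*D1) R l" and sub: "UU (q*D1) R \<subseteq> T1" and c: "card (UU (q*D1) R) \<le> r1*q + q*D1"
      and bD: "b \<le> D1" and bDn: "q*D1 + b \<le> Dn" for q b R l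
  proof -
    have ns: "\<forall>z R' l'. vseq g n k z R' l' \<longrightarrow> q*D1 \<le> z \<longrightarrow> z < q*D1 + b \<longrightarrow> UU z R' \<subseteq> UU (q*D1) R \<union> T1 \<longrightarrow>
          card (UU z R') \<le> card (UU (q*D1) R) + (z - q*D1) \<longrightarrow> \<not> T1 \<subseteq> UU z R'"
    proof (intro allI impI notI)
      fix z R' l'
      assume vz: "vseq g n k z R' l'" and qz: "q*D1 \<le> z" and zlt: "z < q*D1 + b"
        and s2: "UU z R' \<subseteq> UU (q*D1) R \<union> T1" and c2: "card (UU z R') \<le> card (UU (q*D1) R) + (z - q*D1)"
        and cov: "T1 \<subseteq> UU z R'"
      have W1: "UU z R' = T1" using s2 sub cov by auto
      have cz: "card (UU z R') \<le> r1*q + z" using c2 c qz by simp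
      have zD: "z + 1 \<le> Dn" using zlt bDn by simp
      have D1r: "real D1 > 0" using D1p by simp
      have "q * D1 \<le> Dn - 1" using qz zD by linarith
      then have "real (q * D1) \<le> real (Dn - 1)" by (simp only: of_nat_le_iff)
      then have "real q * real D1 \<le> real (Dn - 1)" by simp
      moreover have "real (Dn - 1) = real_of_int (\<Delta> - 1)" using DeltaDn zD by simp
      ultimately have "real q \<le> real_of_int (\<Delta> - 1) / real (\<delta>1 - 1)" using D1r unfolding D1_def by (simp add: field_simps)
      also have "\<dots> \<le> of_int \<lceil>real_of_int (\<Delta> - 1) / real (\<delta>1 - 1)\<rceil>" by (rule le_of_int_ceiling)
      finally have qle: "int q \<le> \<lceil>real_of_int (\<Delta> - 1) / real (\<delta>1 - 1)\<rceil>" by linarith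
      have "int r1 * int q \<le> int r1 * \<lceil>real_of_int (\<Delta> - 1) / real (\<delta>1 - 1)\<rceil>" using qle by (simp add: mult_left_mono)
      moreover have "int z \<le> \<Delta> - 1" using zD DeltaDn by simp
      ultimately have "int r1 * int q + int z < int n1" using h2 by linarith
      then have "int (r1 * q + z) < int n1" by simp
      then have "r1 * q + z < n1" by (simp only: of_nat_less_iff)
      then have "card (UU z R') < n1" using cz by linarith
      then show False using W1 n1 by simp
    qed
    have bd: "b \<le> \<delta>1 - 1" using bD D1_def by simp
    obtain R' l' where R': "vseq g n k (q*D1 + b) R' l'" "UU (q*D1 + b) R' \<subseteq> UU (q*D1) R \<union> T1"
        "card (UU (q*D1 + b) R') \<le> card (UU (q*D1) R) + r1 + b"
      using block_lemma[OF v T1n grp1 bd ns] by blast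
    show ?thesis using R' sub c by (intro exI[of _ R'] exI[of _ l']) auto
  qed

  have p1all: "\<exists>R l. vseq g n k (q*D1) R l \<and> UU (q*D1) R \<subseteq> T1 \<and> card (UU (q*D1) R) \<le> r1*q + q*D1"
    if "q * D1 \<le> Dn" for q
    using that
  proof (induction q)
    case 0
    then show ?case by (intro exI[of _ "\<lambda>_. {}"] exI[of _ "\<lambda>_. 0"]) (simp add: vseq0)
  next
    case (Suc q)
    have e: "Suc q * D1 = q*D1 + D1" by simp
    have "q * D1 \<le> Dn" using Suc.prems by simp
    then obtain R l where Rl: "vseq g n k (q*D1) R l" "UU (q*D1) R \<subseteq> T1" "card (UU (q*D1) R) \<le> r1*q + q*D1"
      using Suc.IH by blast
    obtain R' l' where R': "vseq g n k (q*D1 + D1) R' l'" "UU (q*D1 + D1) R' \<subseteq> T1"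
       "card (UU (q*D1 + D1) R') \<le> r1*q + q*D1 + r1 + D1"
      using p1step[OF Rl, of D1] Suc.prems e by auto
    show ?case using R' e by (intro exI[of _ R'] exI[of _ l']) (auto simp: algebra_simps)
  qed

  have part1: "\<forall>x::nat. int x \<le> \<Delta> \<longrightarrow>
            (x = 0 \<or> Phi_set g n k x \<noteq> {}) \<and>
            int (Phi g n k x) \<le> int r1 * \<lceil>real x / real (\<delta>1 - 1)\<rceil> + int x"
  proof (intro allI impI)
    fix x :: nat assume "int x \<le> \<Delta>"
    then have xD: "x \<le> Dn" using DeltaDn by simp
    show "(x = 0 \<or> Phi_set g n k x \<noteq> {}) \<and> int (Phi g n k x) \<le> int r1 * \<lceil>real x / real (\<delta>1 - 1)\<rceil> + int x"
    proof (cases "x = 0")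
      case True then show ?thesis by (simp add: Phi_def)
    next
      case False
      define q where "q = (x - 1) div D1"
      have qf: "q * D1 < x \<and> x \<le> (q+1)*D1" using divfacts[of x D1] False D1p q_def by simp
      obtain R l where Rl: "vseq g n k (q*D1) R l" "UU (q*D1) R \<subseteq> T1" "card (UU (q*D1) R) \<le> r1*q + q*D1"
        using p1all[of q] qf xD by auto
      define b where "b = x - q*D1"
      have b: "b \<le> D1" "q*D1 + b \<le> Dn" "q*D1 + b = x" using qf xD b_def by (auto simp: algebra_simps)
      obtain R' l' where R': "vseq g n k x R' l'" "card (UU x R') \<le> r1*q + q*D1 + r1 + b"
        using p1step[OF Rl b(1) b(2)] b(3) by auto
      have pl: "Phi_set g n k x \<noteq> {} \<and> Phi g n k x \<le> card (UU x R')" using phi_le[OF R'(1)] .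
      have ce0: "\<lceil>real x / real D1\<rceil> = int q + 1" using qf by (intro ceil_lemma[OF D1p]) simp_all
      have ce: "\<lceil>real x / real (\<delta>1 - 1)\<rceil> = int q + 1" using ce0 unfolding D1_def .
      have "Phi g n k x \<le> r1 * (q + 1) + x" using pl R'(2) b(3) by (simp add: algebra_simps)
      then have "int (Phi g n k x) \<le> int (r1 * (q + 1) + x)" by (simp only: of_nat_le_iff)
      then have "int (Phi g n k x) \<le> int r1 * (int q + 1) + int x" by (simp add: distrib_left)
      then show ?thesis using pl ce by simp
    qed
  qed

  have p2step: "\<exists>R l. vseq g n k (y+b) R l \<and> card (UU (y+b) R) \<le> Phi g n k y + r2 + b"
    if ne: "Phi_set g n k y \<noteq> {}" and yr: "y \<le> rho g n k" and bD: "b \<le> D2" for y b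
  proof -
    obtain R l where Rl: "vseq g n k y R l" "card (UU y R) = Phi g n k y" using phi_opt[OF ne] by blast
    have ym: "Phi g n k y < k + y" using rho_mono[OF fr k1 yr] by simp
    have ns: "\<forall>z R' l'. vseq g n k z R' l' \<longrightarrow> y \<le> z \<longrightarrow> z < y + b \<longrightarrow> UU z R' \<subseteq> UU y R \<union> {1..n} \<longrightarrow>
          card (UU z R') \<le> card (UU y R) + (z - y) \<longrightarrow> \<not> {1..n} \<subseteq> UU z R'"
    proof (intro allI impI notI)
      fix z R' l'
      assume vz: "vseq g n k z R' l'" and yz: "y \<le> z" and zlt: "z < y + b"
        and s2: "UU z R' \<subseteq> UU y R \<union> {1..n}" and c2: "card (UU z R') \<le> card (UU y R) + (z - y)"
        and cov: "{1..n} \<subseteq> UU z R'"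
      have "UU z R' = {1..n}" using vseq_sub[OF vz] cov by auto
      then have "card (UU z R') = n" by simp
      moreover have "z + k \<le> n" using vseq_rank[OF vz fr] .
      ultimately show False using c2 Rl(2) ym yz by linarith
    qed
    have bd: "b \<le> \<delta>2 - 1" using bD D2_def by simp
    obtain R' l' where R': "vseq g n k (y + b) R' l'" "card (UU (y + b) R') \<le> card (UU y R) + r2 + b"
      using block_lemma[OF Rl(1) order_refl grpn bd ns] by blast
    show ?thesis using R' Rl(2) by auto
  qed

  have p2all: "Phi_set g n k (Dn + q*D2) \<noteq> {} \<and> Phi g n k (Dn + q*D2) \<le> r1*cn + r2*q + (Dn + q*D2)"
    if "Dn + q*D2 \<le> rho g n k + 1" for q
    using that
  proof (induction q)
    case 0
    obtain R l where Rl: "vseq g n k (cn*D1) R l" "card (UU (cn*D1) R) \<le> r1*cn + cn*D1"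
      using p1all[of cn] Dn_def by auto
    show ?case using phi_le[OF Rl(1)] Rl(2) Dn_def by auto
  next
    case (Suc q)
    define y where "y = Dn + q*D2"
    have e: "Dn + Suc q * D2 = y + D2" using y_def by simp
    have yr: "y \<le> rho g n k" using Suc.prems e D2p by simp
    have ih: "Phi_set g n k y \<noteq> {} \<and> Phi g n k y \<le> r1*cn + r2*q + y" using Suc.IH yr y_def by simp
    obtain R l where Rl: "vseq g n k (y + D2) R l" "card (UU (y + D2) R) \<le> Phi g n k y + r2 + D2"
      using p2step[of y D2] ih yr by auto
    have pl: "Phi_set g n k (y + D2) \<noteq> {} \<and> Phi g n k (y + D2) \<le> card (UU (y + D2) R)" using phi_le[OF Rl(1)] .
    show ?case using pl Rl(2) ih e by (simp add: algebra_simps)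
  qed

  have part2: "\<forall>x::nat. \<Delta> \<le> int x \<and> x \<le> rho g n k + 1 \<longrightarrow>
            (x = 0 \<or> Phi_set g n k x \<noteq> {}) \<and>
            int (Phi g n k x) \<le> int r1 * cint
               + int r2 * \<lceil>real_of_int (int x - \<Delta>) / real (\<delta>2 - 1)\<rceil> + int x"
  proof (intro allI impI)
    fix x :: nat assume a: "\<Delta> \<le> int x \<and> x \<le> rho g n k + 1"
    then have xD: "Dn \<le> x" and xr: "x \<le> rho g n k + 1" using DeltaDn by auto
    show "(x = 0 \<or> Phi_set g n k x \<noteq> {}) \<and>
            int (Phi g n k x) \<le> int r1 * cint + int r2 * \<lceil>real_of_int (int x - \<Delta>) / real (\<delta>2 - 1)\<rceil> + int x"
    proof (cases "x = Dn")
      case True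
      have h: "Phi_set g n k Dn \<noteq> {} \<and> Phi g n k Dn \<le> r1*cn + Dn" using p2all[of 0] xr True by simp
      then have "int (Phi g n k Dn) \<le> int (r1*cn + Dn)" by (simp only: of_nat_le_iff)
      then have "int (Phi g n k Dn) \<le> int r1 * int cn + int Dn" by simp
      then show ?thesis using h True DeltaDn cn by simp
    next
      case False
      define w where "w = x - Dn"
      have w0: "0 < w" using False xD w_def by simp
      define q where "q = (w - 1) div D2"
      have qf: "q * D2 < w \<and> w \<le> (q+1)*D2" using divfacts[of w D2] w0 D2p q_def by simp
      define y where "y = Dn + q*D2"
      have yx: "y < x" using qf w_def y_def xD by linarith
      have yr: "y \<le> rho g n k" using yx xr by simp
      have ih: "Phi_set g n k y \<noteq> {} \<and> Phi g n k y \<le> r1*cn + r2*q + y" using p2all[of q] yr y_def by simp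
      define b where "b = x - y"
      have b: "b \<le> D2" "y + b = x" using qf w_def y_def b_def yx xD by (simp_all add: algebra_simps; linarith)+
      obtain R l where Rl: "vseq g n k x R l" "card (UU x R) \<le> Phi g n k y + r2 + b"
        using p2step[of y b] ih yr b by auto
      have pl: "Phi_set g n k x \<noteq> {} \<and> Phi g n k x \<le> card (UU x R)" using phi_le[OF Rl(1)] .
      have "real_of_int (int x - \<Delta>) = real w" using DeltaDn w_def xD by simp
      moreover have "\<lceil>real w / real D2\<rceil> = int q + 1" using qf by (intro ceil_lemma[OF D2p]) simp_all
      ultimately have ce: "\<lceil>real_of_int (int x - \<Delta>) / real (\<delta>2 - 1)\<rceil> = int q + 1"
        unfolding D2_def by simp
      have "Phi g n k x \<le> r1*cn + r2*(q+1) + x" using pl Rl(2) ih b by (simp add: algebra_simps)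
      then have "int (Phi g n k x) \<le> int (r1*cn + r2*(q+1) + x)" by (simp only: of_nat_le_iff)
      then have "int (Phi g n k x) \<le> int r1 * int cn + int r2 * (int q + 1) + int x" by (simp add: distrib_left)
      then show ?thesis using pl ce cn by simp
    qed
  qed
  show ?thesis using part1 part2 unfolding cint_def by blast
qed

end
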